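(* For every $k\ge 1$, the bi-hypergraph obtained from $\mathcal H_{2k+1}$ by adding two new vertices $u$ and $v$, removing the edge $\{v_{1,1},v_{1,2},v_{1,3}\}$, and adding the edges $\{u,v_{1,1},v_{1,2}\}$, $\{v,v_{1,2},v_{1,3}\}$, and $\{u,v_{1,j},v_{2k+1,j}\}$ and $\{v,v_{1,j+1},v_{2k+1,j+1}\}$ for all $j\in[2]$, is minimal uncolorable.
   Context: A bi-hypergraph $\mathcal H=(V,E)$ consists of a finite vertex set $V$ and a set $E$ of subsets of $V$, called edges, with no edge contained in another. A mapping $f:V\to\mathbb N$ is a proper coloring of $\mathcal H$ if $1<|f(e)|<|e|$ for every $e\in E$, where $f(e)=\{f(x):x\in e\}$. $\mathcal H$ is colorable if it has a proper coloring, and uncolorable otherwise. A subhypergraph of $\mathcal H$ is a bi-hypergraph $(V',E')$ with $V'\subseteq V$, $E'\subseteq E$; $\mathcal H$ is minimal uncolorable if it is uncolorable but every proper subhypergraph of it is colorable. For $k\ge 2$, $\mathcal H_k$ is the $3$-uniform bi-hypergraph with vertex set $\{v_{i,j}: i\in[k], j\in[3]\}$ (all distinct), with the convention $v_{i,4}=v_{i,1}$, $v_{i,5}=v_{i,2}$, whose edges are the sets $\{v_{i,1},v_{i,2},v_{i,3}\}$ for all $i\in[k]$ and the sets $\{v_{q+1,j},v_{q,j},v_{q,j+t}\}$ for all $q\in[k-1]$, $j\in[3]$, $t\in\{1,2\}$. *)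

theory Defs
  imports Main
begin

type_synonym 'a hypergraph = "'a set \<times> 'a set set"

definition bihypergraph :: "'a hypergraph \<Rightarrow> bool" where
  "bihypergraph H \<longleftrightarrow> finite (fst H) \<and> (\<forall>e\<in>snd H. e \<subseteq> fst H)
     \<and> (\<forall>e\<in>snd H. \<forall>e'\<in>snd H. e \<subseteq> e' \<longrightarrow> e = e')"

definition proper_coloring :: "'a hypergraph \<Rightarrow> ('a \<Rightarrow> nat) \<Rightarrow> bool" where
  "proper_coloring H f \<longleftrightarrow> (\<forall>e\<in>snd H. 1 < card (f ` e) \<and> card (f ` e) < card e)"

definition colorable :: "'a hypergraph \<Rightarrow> bool" where
  "colorable H \<longleftrightarrow> (\<exists>f. proper_coloring H f)"

definition subhypergraph :: "'a hypergraph \<Rightarrow> 'a hypergraph \<Rightarrow> bool" where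
  "subhypergraph H' H \<longleftrightarrow> bihypergraph H' \<and> fst H' \<subseteq> fst H \<and> snd H' \<subseteq> snd H"

definition minimal_uncolorable :: "'a hypergraph \<Rightarrow> bool" where
  "minimal_uncolorable H \<longleftrightarrow> bihypergraph H \<and> \<not> colorable H \<and>
     (\<forall>H'. subhypergraph H' H \<and> H' \<noteq> H \<longrightarrow> colorable H')"

text \<open>Vertices: Vx i j stands for v_{i,j}; U and W stand for the new vertices u and v.\<close>

datatype vtx = Vx nat nat | U | W

text \<open>v_{i,j} with the cyclic convention v_{i,4} = v_{i,1}, v_{i,5} = v_{i,2} (for j \<ge> 1).\<close>
definition hv :: "nat \<Rightarrow> nat \<Rightarrow> vtx" where
  "hv i j = Vx i (((j - 1) mod 3) + 1)"

definition H :: "nat \<Rightarrow> vtx hypergraph" where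
  "H k = ({Vx i j | i j. i \<in> {1..k} \<and> j \<in> {1..3}},
          {{hv i 1, hv i 2, hv i 3} | i. i \<in> {1..k}} \<union>
          {{hv (q+1) j, hv q j, hv q (j+t)} | q j t. q \<in> {1..k-1} \<and> j \<in> {1..3} \<and> t \<in> {1,2}})"

definition G :: "nat \<Rightarrow> vtx hypergraph" where
  "G k = (let n = 2*k+1 in
     (fst (H n) \<union> {U, W},
      (snd (H n) - {{hv 1 1, hv 1 2, hv 1 3}}) \<union>
      {{U, hv 1 1, hv 1 2}, {W, hv 1 2, hv 1 3}} \<union>
      {{U, hv 1 j, hv n j} | j. j \<in> {1..2}} \<union>
      {{W, hv 1 (j+1), hv n (j+1)} | j. j \<in> {1..2}}))"

end

theory Submission
  imports Defs
begin


definition good3 :: "nat \<Rightarrow> nat \<Rightarrow> nat \<Rightarrow> bool" where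
  "good3 a b c \<longleftrightarrow> \<not>(a = b \<and> b = c) \<and> (a = b \<or> b = c \<or> a = c)"

definition properE :: "(vtx \<Rightarrow> nat) \<Rightarrow> vtx set \<Rightarrow> bool" where
  "properE f e \<longleftrightarrow> 1 < card (f ` e) \<and> card (f ` e) < card e"

definition jj :: "nat \<Rightarrow> nat \<Rightarrow> nat" where "jj j t = ((j + t - 1) mod 3) + 1"

definition tri :: "nat \<Rightarrow> vtx set" where "tri i = {Vx i 1, Vx i 2, Vx i 3}"
definition lnk :: "nat \<Rightarrow> nat \<Rightarrow> nat \<Rightarrow> vtx set" where
  "lnk q j t = {Vx (Suc q) j, Vx q j, Vx q (jj j t)}"
definition ex :: "nat \<Rightarrow> nat \<Rightarrow> vtx set" where
  "ex n s = (if s = 1 then {U, Vx 1 1, Vx 1 2} else if s = 2 then {W, Vx 1 2, Vx 1 3}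
    else if s = 3 then {U, Vx 1 1, Vx n 1} else if s = 4 then {U, Vx 1 2, Vx n 2}
    else if s = 5 then {W, Vx 1 2, Vx n 2} else {W, Vx 1 3, Vx n 3})"

lemma hv1: "hv i 1 = Vx i 1" and hv2: "hv i 2 = Vx i 2" and hv3: "hv i 3 = Vx i 3"
  by (simp_all add: hv_def)

lemma hvjj: "hv q (j + t) = Vx q (jj j t)" by (simp add: hv_def jj_def)

lemma edges_cases:
  assumes "e \<in> snd (G k)"
  shows "(\<exists>i\<in>{2..2*k+1}. e = tri i) \<or>
         (\<exists>q\<in>{1..2*k}. \<exists>j\<in>{1..3}. \<exists>t\<in>{1,2}. e = lnk q j t) \<or>
         (\<exists>s\<in>{1..6}. e = ex (2*k+1) s)"
proof -
  let ?n = "2*k+1"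
  have "e \<in> snd (H ?n) - {{hv 1 1, hv 1 2, hv 1 3}} \<or> e \<in> {{U, hv 1 1, hv 1 2}, {W, hv 1 2, hv 1 3}} \<or>
        e \<in> {{U, hv 1 j, hv ?n j} | j. j \<in> {1..2}} \<or> e \<in> {{W, hv 1 (j+1), hv ?n (j+1)} | j. j \<in> {1..2}}"
    using assms unfolding G_def Let_def by auto
  moreover
  { assume a: "e \<in> snd (H ?n) - {{hv 1 1, hv 1 2, hv 1 3}}"
    then have "e \<in> {{hv i 1, hv i 2, hv i 3} | i. i \<in> {1..?n}} \<or>
      e \<in> {{hv (q+1) j, hv q j, hv q (j+t)} | q j t. q \<in> {1..?n-1} \<and> j \<in> {1..3} \<and> t \<in> {1,2}}"
      unfolding H_def by auto
    moreover
    { assume "e \<in> {{hv i 1, hv i 2, hv i 3} | i. i \<in> {1..?n}}"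
      then obtain i where i0: "i \<in> {1..?n}" "e = {hv i 1, hv i 2, hv i 3}" by blast
      then have i: "i \<in> {1..?n}" "e = tri i" by (simp_all only: tri_def hv1 hv2 hv3)
      have "i \<noteq> 1" using a i0 by auto
      with i have "\<exists>i\<in>{2..2*k+1}. e = tri i" by force }
    moreover
    { assume "e \<in> {{hv (q+1) j, hv q j, hv q (j+t)} | q j t. q \<in> {1..?n-1} \<and> j \<in> {1..3} \<and> t \<in> {1,2}}"
      then obtain q j t where "q \<in> {1..2*k}" "j \<in> {1..3}" "t \<in> {1,2}" "e = {hv (q+1) j, hv q j, hv q (j+t)}"
        by auto
      moreover have "j \<in> {1..3} \<Longrightarrow> hv i j = Vx i j" for i by (auto simp: hv_def)
      ultimately have "q \<in> {1..2*k}" "j \<in> {1..3}" "t \<in> {1,2}" "e = lnk q j t"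
        by (simp_all add: lnk_def hvjj)
      then have "\<exists>q\<in>{1..2*k}. \<exists>j\<in>{1..3}. \<exists>t\<in>{1,2}. e = lnk q j t" by blast }
    ultimately have ?thesis by blast }
  moreover
  { assume "e \<in> {{U, hv 1 1, hv 1 2}, {W, hv 1 2, hv 1 3}}"
    then have "e = ex ?n 1 \<or> e = ex ?n 2" by (auto simp: ex_def hv_def)
    then have ?thesis by force }
  moreover
  { assume "e \<in> {{U, hv 1 j, hv ?n j} | j. j \<in> {1..2}}"
    then obtain j where j: "j \<in> {1..2}" "e = {U, hv 1 j, hv ?n j}" by blast
    from j(1) have "j = 1 \<or> j = 2" by auto
    with j(2) have "e = ex ?n 3 \<or> e = ex ?n 4" by (auto simp: ex_def hv_def)
    then have ?thesis by force }
  moreover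
  { assume "e \<in> {{W, hv 1 (j+1), hv ?n (j+1)} | j. j \<in> {1..2}}"
    then obtain j where j: "j \<in> {1..2}" "e = {W, hv 1 (j+1), hv ?n (j+1)}" by blast
    from j(1) have "j = 1 \<or> j = 2" by auto
    with j(2) have "e = ex ?n 5 \<or> e = ex ?n 6" by (auto simp: ex_def hv_def)
    then have ?thesis by force }
  ultimately show ?thesis by blast
qed

lemma Gsnd: "snd (G k) = (snd (H (2*k+1)) - {{hv 1 1, hv 1 2, hv 1 3}}) \<union>
      {{U, hv 1 1, hv 1 2}, {W, hv 1 2, hv 1 3}} \<union>
      {{U, hv 1 j, hv (2*k+1) j} | j. j \<in> {1..2}} \<union>
      {{W, hv 1 (j+1), hv (2*k+1) (j+1)} | j. j \<in> {1..2}}"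
  unfolding G_def Let_def by simp

lemma Hsnd: "snd (H n) = {{hv i 1, hv i 2, hv i 3} | i. i \<in> {1..n}} \<union>
          {{hv (q+1) j, hv q j, hv q (j+t)} | q j t. q \<in> {1..n-1} \<and> j \<in> {1..3} \<and> t \<in> {1,2}}"
  unfolding H_def snd_conv by (rule refl)

lemma inG1: "e \<in> snd (H (2*k+1)) \<Longrightarrow> e \<noteq> {hv 1 1, hv 1 2, hv 1 3} \<Longrightarrow> e \<in> snd (G k)"
  unfolding Gsnd by (intro UnI1 DiffI) simp_all

lemma tri_in: assumes "i \<in> {2..2*k+1}" shows "tri i \<in> snd (G k)"
proof (rule inG1)
  have e: "tri i = {hv i 1, hv i 2, hv i 3}" by (simp only: tri_def hv1 hv2 hv3)
  have "i \<in> {1..2*k+1}" using assms by simp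
  then have "tri i \<in> {{hv i 1, hv i 2, hv i 3} | i. i \<in> {1..2*k+1}}"
    unfolding e by blast
  then show "tri i \<in> snd (H (2*k+1))" unfolding Hsnd by (rule UnI1)
  have "Vx i 1 \<in> tri i" by (simp add: tri_def)
  moreover have "Vx i 1 \<notin> {hv 1 1, hv 1 2, hv 1 3}" using assms by (simp add: hv_def)
  ultimately show "tri i \<noteq> {hv 1 1, hv 1 2, hv 1 3}" by blast
qed

lemma lnk_in: assumes a: "q \<in> {1..2*k}" "j \<in> {1..3}" "t \<in> {1,2}" shows "lnk q j t \<in> snd (G k)"
proof (rule inG1)
  have hj: "hv i j = Vx i j" for i using a(2) by (auto simp: hv_def)
  have e: "lnk q j t = {hv (q+1) j, hv q j, hv q (j+t)}" unfolding lnk_def hj hvjj by simp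
  have "q \<in> {1..(2*k+1)-1} \<and> j \<in> {1..3} \<and> t \<in> {1,2}" using a by simp
  then have "lnk q j t \<in> {{hv (q+1) j, hv q j, hv q (j+t)} | q j t. q \<in> {1..(2*k+1)-1} \<and> j \<in> {1..3} \<and> t \<in> {1,2}}"
    unfolding e by blast
  then show "lnk q j t \<in> snd (H (2*k+1))" unfolding Hsnd by (rule UnI2)
  have "Vx (Suc q) j \<in> lnk q j t" by (simp add: lnk_def)
  moreover have "Vx (Suc q) j \<notin> {hv 1 1, hv 1 2, hv 1 3}" using a by (simp add: hv_def)
  ultimately show "lnk q j t \<noteq> {hv 1 1, hv 1 2, hv 1 3}" by blast
qed

lemma ex_in: assumes "s \<in> {1..6}" shows "ex (2*k+1) s \<in> snd (G k)"
proof -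
  have n12: "(1::nat) + 1 = 2" and n23: "(2::nat)+1 = 3" by simp_all
  have e1: "ex (2*k+1) 1 = {U, hv 1 1, hv 1 2}" "ex (2*k+1) 2 = {W, hv 1 2, hv 1 3}"
    unfolding ex_def hv1 hv2 hv3 by simp_all
  have e3: "ex (2*k+1) 3 = {U, hv 1 1, hv (2*k+1) 1}" "ex (2*k+1) 4 = {U, hv 1 2, hv (2*k+1) 2}"
    "ex (2*k+1) 5 = {W, hv 1 2, hv (2*k+1) 2}" "ex (2*k+1) 6 = {W, hv 1 3, hv (2*k+1) 3}"
    unfolding ex_def hv1 hv2 hv3 by simp_all
  have m3: "{U, hv 1 1, hv (2*k+1) 1} \<in> {{U, hv 1 j, hv (2*k+1) j} | j. j \<in> {1..2}}"
    by (rule CollectI, rule exI[of _ 1], simp)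
  have m4: "{U, hv 1 2, hv (2*k+1) 2} \<in> {{U, hv 1 j, hv (2*k+1) j} | j. j \<in> {1..2}}"
    by (rule CollectI, rule exI[of _ 2], simp)
  have m5: "{W, hv 1 2, hv (2*k+1) 2} \<in> {{W, hv 1 (j+1), hv (2*k+1) (j+1)} | j. j \<in> {1..2}}"
    by (rule CollectI, rule exI[of _ 1], simp only: n12, simp)
  have m6: "{W, hv 1 3, hv (2*k+1) 3} \<in> {{W, hv 1 (j+1), hv (2*k+1) (j+1)} | j. j \<in> {1..2}}"
    by (rule CollectI, rule exI[of _ 2], simp only: n23, simp)
  have r1: "ex (2*k+1) 1 \<in> snd (G k)" unfolding Gsnd e1 by (intro UnI1 UnI2) simp
  have r2: "ex (2*k+1) 2 \<in> snd (G k)" unfolding Gsnd e1 by (intro UnI1 UnI2) simp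
  have r3: "ex (2*k+1) 3 \<in> snd (G k)" unfolding Gsnd e3 by (intro UnI1 UnI2 m3)
  have r4: "ex (2*k+1) 4 \<in> snd (G k)" unfolding Gsnd e3 by (intro UnI1 UnI2 m4)
  have r5: "ex (2*k+1) 5 \<in> snd (G k)" unfolding Gsnd e3 by (intro UnI2 m5)
  have r6: "ex (2*k+1) 6 \<in> snd (G k)" unfolding Gsnd e3 by (intro UnI2 m6)
  have "s = 1 \<or> s = 2 \<or> s = 3 \<or> s = 4 \<or> s = 5 \<or> s = 6" using assms by auto
  then show ?thesis using r1 r2 r3 r4 r5 r6 by (elim disjE) simp_all
qed




lemma proper3:
  assumes "x \<noteq> y" "y \<noteq> z" "x \<noteq> z"
  shows "properE f {x,y,z} \<longleftrightarrow> good3 (f x) (f y) (f z)"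
  using assms by (auto simp: properE_def good3_def card_insert_if)

lemma jj_ne: assumes "j \<in> {1..3}" "t \<in> {1,2}" shows "jj j t \<noteq> j"
proof -
  have "j = 1 \<or> j = 2 \<or> j = 3" using assms by auto
  moreover have "t = 1 \<or> t = 2" using assms by auto
  ultimately show ?thesis by (elim disjE) (simp_all add: jj_def)
qed

lemma jj_vals: "jj 1 1 = 2" "jj 1 2 = 3" "jj 2 1 = 3" "jj 2 2 = 1" "jj 3 1 = 1" "jj 3 2 = 2"
  by (simp_all add: jj_def)

lemma proper_tri: "properE f (tri i) \<longleftrightarrow> good3 (f (Vx i 1)) (f (Vx i 2)) (f (Vx i 3))"
  unfolding tri_def by (rule proper3) auto

lemma proper_lnk: "j \<in> {1..3} \<Longrightarrow> t \<in> {1,2} \<Longrightarrow>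
   properE f (lnk q j t) \<longleftrightarrow> good3 (f (Vx (Suc q) j)) (f (Vx q j)) (f (Vx q (jj j t)))"
  unfolding lnk_def using jj_ne[of j t] by (intro proper3) auto

lemma proper_ex:
  assumes "n \<noteq> 1"
  shows "properE f (ex n 1) \<longleftrightarrow> good3 (f U) (f (Vx 1 1)) (f (Vx 1 2))"
    "properE f (ex n 2) \<longleftrightarrow> good3 (f W) (f (Vx 1 2)) (f (Vx 1 3))"
    "properE f (ex n 3) \<longleftrightarrow> good3 (f U) (f (Vx 1 1)) (f (Vx n 1))"
    "properE f (ex n 4) \<longleftrightarrow> good3 (f U) (f (Vx 1 2)) (f (Vx n 2))"
    "properE f (ex n 5) \<longleftrightarrow> good3 (f W) (f (Vx 1 2)) (f (Vx n 2))"
    "properE f (ex n 6) \<longleftrightarrow> good3 (f W) (f (Vx 1 3)) (f (Vx n 3))"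
  unfolding ex_def using assms by (simp_all add: proper3)

lemma twostep:
  assumes "good3 a1 a2 a3" "good3 b1 b2 b3" "good3 c1 c2 c3"
   "good3 b1 a1 a2" "good3 b1 a1 a3" "good3 b2 a2 a3" "good3 b2 a2 a1" "good3 b3 a3 a1" "good3 b3 a3 a2"
   "good3 c1 b1 b2" "good3 c1 b1 b3" "good3 c2 b2 b3" "good3 c2 b2 b1" "good3 c3 b3 b1" "good3 c3 b3 b2"
  shows "c1 = a1 \<and> c2 = a2 \<and> c3 = a3"
  using assms unfolding good3_def by smt

lemma final:
  assumes "good3 b1 b2 b3" "good3 c1 c2 c3"
   "good3 b1 a1 a2" "good3 b1 a1 a3" "good3 b2 a2 a3" "good3 b2 a2 a1" "good3 b3 a3 a1" "good3 b3 a3 a2"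
   "good3 c1 b1 b2" "good3 c1 b1 b3" "good3 c2 b2 b3" "good3 c2 b2 b1" "good3 c3 b3 b1" "good3 c3 b3 b2"
   "good3 u a1 a2" "good3 w a2 a3" "good3 u a1 c1" "good3 u a2 c2" "good3 w a2 c2" "good3 w a3 c3"
  shows False
  using assms unfolding good3_def by smt

definition LK :: "(vtx \<Rightarrow> nat) \<Rightarrow> nat \<Rightarrow> bool" where
  "LK f q \<longleftrightarrow> good3 (f (Vx (Suc q) 1)) (f (Vx q 1)) (f (Vx q 2)) \<and>
     good3 (f (Vx (Suc q) 1)) (f (Vx q 1)) (f (Vx q 3)) \<and>
     good3 (f (Vx (Suc q) 2)) (f (Vx q 2)) (f (Vx q 3)) \<and>
     good3 (f (Vx (Suc q) 2)) (f (Vx q 2)) (f (Vx q 1)) \<and>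
     good3 (f (Vx (Suc q) 3)) (f (Vx q 3)) (f (Vx q 1)) \<and>
     good3 (f (Vx (Suc q) 3)) (f (Vx q 3)) (f (Vx q 2))"

definition TR :: "(vtx \<Rightarrow> nat) \<Rightarrow> nat \<Rightarrow> bool" where
  "TR f i \<longleftrightarrow> good3 (f (Vx i 1)) (f (Vx i 2)) (f (Vx i 3))"

lemma uncol:
  assumes k: "k \<ge> 1" and pc: "proper_coloring (G k) f"
  shows False
proof -
  let ?n = "2*k+1"
  have pe: "\<And>e. e \<in> snd (G k) \<Longrightarrow> properE f e" using pc by (simp add: proper_coloring_def properE_def)
  have T: "TR f i" if "i \<in> {2..?n}" for i
    using pe[OF tri_in[OF that]] by (simp add: proper_tri TR_def)
  have L: "LK f q" if "q \<in> {1..2*k}" for q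
  proof -
    have "properE f (lnk q j t)" if "j \<in> {1..3}" "t \<in> {1,2}" for j t
      using pe[OF lnk_in[OF \<open>q \<in> {1..2*k}\<close> that]] .
    then have "good3 (f (Vx (Suc q) j)) (f (Vx q j)) (f (Vx q (jj j t)))" if "j \<in> {1..3}" "t \<in> {1,2}" for j t
      using that proper_lnk by blast
    then show ?thesis unfolding LK_def
      by (metis jj_vals atLeastAtMost_iff insert_iff le_refl one_le_numeral numeral_le_iff semiring_norm(68,69,72) one_le_numeral)
  qed
  have two: "f (Vx (q+2) j) = f (Vx q j)" if "2 \<le> q" "q + 2 \<le> ?n" "j \<in> {1,2,3}" for q j
  proof -
    have "TR f q" "TR f (Suc q)" "TR f (Suc (Suc q))" using that by (auto intro: T)
    moreover have "LK f q" "LK f (Suc q)" using that by (auto intro: L)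
    ultimately show ?thesis using that twostep[of "f (Vx q 1)" "f (Vx q 2)" "f (Vx q 3)"
       "f (Vx (Suc q) 1)" "f (Vx (Suc q) 2)" "f (Vx (Suc q) 3)"
       "f (Vx (Suc (Suc q)) 1)" "f (Vx (Suc (Suc q)) 2)" "f (Vx (Suc (Suc q)) 3)"]
      unfolding TR_def LK_def by auto
  qed
  have ind: "\<forall>j\<in>{1,2,3}. f (Vx (2*i+1) j) = f (Vx 3 j)" if "1 \<le> i" "i \<le> k" for i
    using that
  proof (induction i)
    case 0 then show ?case by simp
  next
    case (Suc i)
    show ?case
    proof (cases "i = 0")
      case True then show ?thesis by simp
    next
      case False
      then have IH: "\<forall>j\<in>{1,2,3}. f (Vx (2*i+1) j) = f (Vx 3 j)" using Suc by auto
      have "f (Vx (2*i+1+2) j) = f (Vx (2*i+1) j)" if "j \<in> {1,2,3}" for j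
        using two[of "2*i+1" j] Suc.prems False that by auto
      moreover have "2*Suc i+1 = 2*i+1+2" by simp
      ultimately show ?thesis using IH by metis
    qed
  qed
  from ind[of k] k have cn: "f (Vx ?n 1) = f (Vx 3 1)" "f (Vx ?n 2) = f (Vx 3 2)" "f (Vx ?n 3) = f (Vx 3 3)"
    by auto
  have "TR f 2" "TR f 3" using k by (auto intro: T)
  moreover have "LK f 1" "LK f 2" using k by (auto intro: L)
  moreover have nn: "?n \<noteq> 1" using k by simp
  have exs: "properE f (ex ?n 1)" "properE f (ex ?n 2)" "properE f (ex ?n 3)"
     "properE f (ex ?n 4)" "properE f (ex ?n 5)" "properE f (ex ?n 6)"
    by (rule pe[OF ex_in], simp)+
  have "good3 (f U) (f (Vx 1 1)) (f (Vx 1 2))" "good3 (f W) (f (Vx 1 2)) (f (Vx 1 3))"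
    "good3 (f U) (f (Vx 1 1)) (f (Vx ?n 1))" "good3 (f U) (f (Vx 1 2)) (f (Vx ?n 2))"
    "good3 (f W) (f (Vx 1 2)) (f (Vx ?n 2))" "good3 (f W) (f (Vx 1 3)) (f (Vx ?n 3))"
    using proper_ex[OF nn, of f] exs by blast+
  ultimately show False unfolding cn TR_def LK_def
    using final[of "f (Vx 2 1)" "f (Vx 2 2)" "f (Vx 2 3)" "f (Vx 3 1)" "f (Vx 3 2)" "f (Vx 3 3)"
        "f (Vx 1 1)" "f (Vx 1 2)" "f (Vx 1 3)" "f U" "f W"]
    by (simp add: numeral_2_eq_2 numeral_3_eq_3)
qed




type_synonym tr = "nat \<times> nat \<times> nat"

fun sel :: "nat \<Rightarrow> tr \<Rightarrow> nat" where
  "sel j (a,b,c) = (if j = 1 then a else if j = 2 then b else c)"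

definition Lt :: "tr \<Rightarrow> tr \<Rightarrow> tr \<Rightarrow> tr \<Rightarrow> tr \<Rightarrow> nat \<Rightarrow> nat \<Rightarrow> tr" where
  "Lt A1 A0 M B1 B0 m q = (if q < m then (if odd q then A1 else A0) else if q = m then M
      else (if odd q then B1 else B0))"

fun colf :: "(nat \<Rightarrow> tr) \<Rightarrow> nat \<Rightarrow> nat \<Rightarrow> vtx \<Rightarrow> nat" where
  "colf L u w (Vx i j) = sel j (L i)"
| "colf L u w U = u"
| "colf L u w W = w"

definition lk :: "tr \<Rightarrow> tr \<Rightarrow> nat \<Rightarrow> nat \<Rightarrow> bool" where
  "lk a b j t \<longleftrightarrow> good3 (sel j b) (sel j a) (sel (jj j t) a)"

definition lkok :: "tr \<Rightarrow> tr \<Rightarrow> bool \<Rightarrow> nat \<times> nat \<Rightarrow> nat \<Rightarrow> nat \<Rightarrow> bool" where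
  "lkok a b skip r j t \<longleftrightarrow> (skip \<and> (j,t) = r) \<or> lk a b j t"

definition allk :: "tr \<Rightarrow> tr \<Rightarrow> bool \<Rightarrow> nat \<times> nat \<Rightarrow> bool" where
  "allk a b skip r \<longleftrightarrow> lkok a b skip r 1 1 \<and> lkok a b skip r 1 2 \<and> lkok a b skip r 2 1 \<and>
     lkok a b skip r 2 2 \<and> lkok a b skip r 3 1 \<and> lkok a b skip r 3 2"

definition triok :: "tr \<Rightarrow> bool" where
  "triok a \<longleftrightarrow> good3 (sel 1 a) (sel 2 a) (sel 3 a)"

lemma allkD: "allk a b skip r \<Longrightarrow> j \<in> {1..3} \<Longrightarrow> t \<in> {1,2} \<Longrightarrow> \<not> (skip \<and> (j,t) = r) \<Longrightarrow> lk a b j t"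
proof -
  assume a: "allk a b skip r" "j \<in> {1..3}" "t \<in> {1,2}" "\<not> (skip \<and> (j,t) = r)"
  have "j = 1 \<or> j = 2 \<or> j = 3" "t = 1 \<or> t = 2" using a by auto
  then have "lkok a b skip r j t" using a(1) unfolding allk_def by auto
  then show ?thesis using a(4) unfolding lkok_def by blast
qed

lemma assemble:
  fixes k m :: nat and A1 A0 M B1 B0 :: tr and u w :: nat and skipT skipL :: bool and r :: "nat \<times> nat"
    and X :: "nat set"
  defines "f \<equiv> colf (Lt A1 A0 M B1 B0 m) u w"
  assumes k: "k \<ge> 1"
  and hA: "allk A1 A0 False r" "allk A0 A1 False r"
  and hB: "allk B1 B0 False r" "allk B0 B1 False r"
  and hAM1: "2 \<le> m \<Longrightarrow> odd m \<Longrightarrow> allk A0 M False r"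
  and hAM0: "2 \<le> m \<Longrightarrow> even m \<Longrightarrow> allk A1 M False r"
  and hMB1: "odd m \<Longrightarrow> allk M B0 skipL r"
  and hMB0: "even m \<Longrightarrow> allk M B1 skipL r"
  and ht: "triok A1" "triok A0" "triok B1" "triok B0"
  and htM: "\<not> skipT \<Longrightarrow> 2 \<le> m \<Longrightarrow> triok M"
  and hex: "\<And>s. s \<in> {1..6} \<Longrightarrow> s \<notin> X \<Longrightarrow> properE f (ex (2*k+1) s)"
  shows "\<forall>e\<in>snd (G k). properE f e \<or> (skipT \<and> e = tri m) \<or> (skipL \<and> e = lnk m (fst r) (snd r))
           \<or> (\<exists>s\<in>X. e = ex (2*k+1) s)"
proof
  fix e assume e: "e \<in> snd (G k)"
  let ?L = "Lt A1 A0 M B1 B0 m"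
  have fv: "f (Vx i j) = sel j (?L i)" for i j unfolding f_def by simp
  from edges_cases[OF e] consider
      (T) i where "i \<in> {2..2*k+1}" "e = tri i"
    | (L) q j t where "q \<in> {1..2*k}" "j \<in> {1..3}" "t \<in> {1,2}" "e = lnk q j t"
    | (E) s where "s \<in> {1..6}" "e = ex (2*k+1) s"
    by blast
  then show "properE f e \<or> (skipT \<and> e = tri m) \<or> (skipL \<and> e = lnk m (fst r) (snd r))
           \<or> (\<exists>s\<in>X. e = ex (2*k+1) s)"
  proof cases
    case T
    show ?thesis
    proof (cases "skipT \<and> i = m")
      case True then show ?thesis using T by simp
    next
      case False
      have "triok (?L i)"
      proof -
        consider "i < m" | "i = m" | "m < i" by linarith
        then show ?thesis
        proof cases
          case 1 then show ?thesis using ht by (simp add: Lt_def)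
        next
          case 2 then show ?thesis using htM False T by (simp add: Lt_def)
        next
          case 3 then show ?thesis using ht by (simp add: Lt_def)
        qed
      qed
      then have "properE f e" unfolding T(2) proper_tri fv triok_def .
      then show ?thesis by simp
    qed
  next
    case L
    show ?thesis
    proof (cases "skipL \<and> q = m \<and> (j,t) = r")
      case True then show ?thesis using L by auto
    next
      case False
      have q1: "1 \<le> q" using L by simp
      have "lk (?L q) (?L (Suc q)) j t"
      proof -
        consider "Suc q < m" | "Suc q = m" | "q = m" | "m < q" by linarith
        then show ?thesis
        proof cases
          case 1
          then show ?thesis using hA L by (cases "odd q") (auto simp: Lt_def intro: allkD)
        next
          case 2
          then have "2 \<le> m" "q = m - 1" using q1 by auto
          then show ?thesis using hAM1 hAM0 L 2
            by (cases "odd m") (auto simp: Lt_def intro!: allkD)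
        next
          case 3
          then show ?thesis using hMB1 hMB0 L False
            by (cases "odd m") (auto simp: Lt_def intro!: allkD)
        next
          case 4
          then show ?thesis using hB L by (cases "odd q") (auto simp: Lt_def intro: allkD)
        qed
      qed
      then have "properE f e" unfolding L(4) proper_lnk[OF L(2,3)] fv lk_def .
      then show ?thesis by simp
    qed
  next
    case E
    then show ?thesis using hex by blast
  qed
qed



lemma inst_Teven:
  fixes k m :: nat
  assumes k: "k \<ge> 1" and m: "m \<in> {2..2*k+1}" "even m"
  shows "\<exists>f. \<forall>e\<in>snd (G k). e \<noteq> tri m \<longrightarrow> properE f e"
proof -
  define A1 :: tr where "A1 = (0,0,1)"
  define A0 :: tr where "A0 = (1,1,0)"
  define M :: tr where "M = (1,1,1)"
  define B1 :: tr where "B1 = (0,0,2)"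
  define B0 :: tr where "B0 = (2,2,0)"
  define u :: nat where "u = 1"
  define w :: nat where "w = 1"
  define f where "f = colf (Lt A1 A0 M B1 B0 m) u w"
  have nn: "2*k+1 \<noteq> 1" using k by simp
  have mle: "m \<le> 2*k+1" using m by auto
  have mfacts: "1 < m" "m < 2*k+1" using m unfolding atLeastAtMost_iff by presburger+
  have hex: "properE f (ex (2*k+1) s)" if "s \<in> {1..6}" "s \<notin> {}" for s
  proof -
    have "s = 1 \<or> s = 2 \<or> s = 3 \<or> s = 4 \<or> s = 5 \<or> s = 6" using that by auto
    then show ?thesis using that m mle mfacts
      by (elim disjE) (simp_all only: proper_ex[OF nn] f_def colf.simps,
          simp_all add: Lt_def A1_def A0_def M_def B1_def B0_def u_def w_def good3_def)
  qed
  have "\<forall>e\<in>snd (G k). properE f e \<or> (True \<and> e = tri m) \<or> (False \<and> e = lnk m (fst (0::nat,0::nat)) (snd (0::nat,0::nat)))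
           \<or> (\<exists>s\<in>{}. e = ex (2*k+1) s)"
    unfolding f_def
    by (rule assemble[OF k]) (use m hex[unfolded f_def] in
        \<open>simp_all add: A1_def A0_def M_def B1_def B0_def u_def w_def allk_def lkok_def lk_def jj_def triok_def good3_def\<close>)
  then show ?thesis by (intro exI[of _ f]) auto
qed

lemma inst_Todd:
  fixes k m :: nat
  assumes k: "k \<ge> 1" and m: "m \<in> {2..2*k+1}" "odd m"
  shows "\<exists>f. \<forall>e\<in>snd (G k). e \<noteq> tri m \<longrightarrow> properE f e"
proof -
  define A1 :: tr where "A1 = (0,0,1)"
  define A0 :: tr where "A0 = (1,1,0)"
  define M :: tr where "M = (0,0,0)"
  define B1 :: tr where "B1 = (1,1,2)"
  define B0 :: tr where "B0 = (2,2,1)"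
  define u :: nat where "u = 1"
  define w :: nat where "w = 1"
  define f where "f = colf (Lt A1 A0 M B1 B0 m) u w"
  have nn: "2*k+1 \<noteq> 1" using k by simp
  have mle: "m \<le> 2*k+1" using m by auto
  have mfacts: "1 < m" using m unfolding atLeastAtMost_iff by presburger+
  have hex: "properE f (ex (2*k+1) s)" if "s \<in> {1..6}" "s \<notin> {}" for s
  proof -
    have "s = 1 \<or> s = 2 \<or> s = 3 \<or> s = 4 \<or> s = 5 \<or> s = 6" using that by auto
    then show ?thesis using that m mle mfacts
      by (elim disjE) (simp_all only: proper_ex[OF nn] f_def colf.simps,
          simp_all add: Lt_def A1_def A0_def M_def B1_def B0_def u_def w_def good3_def)
  qed
  have "\<forall>e\<in>snd (G k). properE f e \<or> (True \<and> e = tri m) \<or> (False \<and> e = lnk m (fst (0::nat,0::nat)) (snd (0::nat,0::nat)))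
           \<or> (\<exists>s\<in>{}. e = ex (2*k+1) s)"
    unfolding f_def
    by (rule assemble[OF k]) (use m hex[unfolded f_def] in
        \<open>simp_all add: A1_def A0_def M_def B1_def B0_def u_def w_def allk_def lkok_def lk_def jj_def triok_def good3_def\<close>)
  then show ?thesis by (intro exI[of _ f]) auto
qed

lemma inst_L110:
  fixes k m :: nat
  assumes k: "k \<ge> 1" and m: "m \<in> {1..2*k}" "even m"
  shows "\<exists>f. \<forall>e\<in>snd (G k). e \<noteq> lnk m 1 1 \<longrightarrow> properE f e"
proof -
  define A1 :: tr where "A1 = (0,0,1)"
  define A0 :: tr where "A0 = (1,1,0)"
  define M :: tr where "M = (1,1,0)"
  define B1 :: tr where "B1 = (1,0,0)"
  define B0 :: tr where "B0 = (0,1,1)"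
  define u :: nat where "u = 1"
  define w :: nat where "w = 1"
  define f where "f = colf (Lt A1 A0 M B1 B0 m) u w"
  have nn: "2*k+1 \<noteq> 1" using k by simp
  have mle: "m \<le> 2*k+1" using m by auto
  have mfacts: "1 < m" "m < 2*k+1" using m unfolding atLeastAtMost_iff by presburger+
  have hex: "properE f (ex (2*k+1) s)" if "s \<in> {1..6}" "s \<notin> {}" for s
  proof -
    have "s = 1 \<or> s = 2 \<or> s = 3 \<or> s = 4 \<or> s = 5 \<or> s = 6" using that by auto
    then show ?thesis using that m mle mfacts
      by (elim disjE) (simp_all only: proper_ex[OF nn] f_def colf.simps,
          simp_all add: Lt_def A1_def A0_def M_def B1_def B0_def u_def w_def good3_def)
  qed
  have "\<forall>e\<in>snd (G k). properE f e \<or> (False \<and> e = tri m) \<or> (True \<and> e = lnk m (fst (1::nat,1::nat)) (snd (1::nat,1::nat)))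
           \<or> (\<exists>s\<in>{}. e = ex (2*k+1) s)"
    unfolding f_def
    by (rule assemble[OF k]) (use m hex[unfolded f_def] in
        \<open>simp_all add: A1_def A0_def M_def B1_def B0_def u_def w_def allk_def lkok_def lk_def jj_def triok_def good3_def\<close>)
  then show ?thesis by (intro exI[of _ f]) auto
qed

lemma inst_L111:
  fixes k m :: nat
  assumes k: "k \<ge> 1" and m: "m \<in> {1..2*k}" "odd m"
  shows "\<exists>f. \<forall>e\<in>snd (G k). e \<noteq> lnk m 1 1 \<longrightarrow> properE f e"
proof -
  define A1 :: tr where "A1 = (0,0,1)"
  define A0 :: tr where "A0 = (1,1,0)"
  define M :: tr where "M = (0,0,1)"
  define B1 :: tr where "B1 = (1,0,0)"
  define B0 :: tr where "B0 = (0,1,1)"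
  define u :: nat where "u = 1"
  define w :: nat where "w = 1"
  define f where "f = colf (Lt A1 A0 M B1 B0 m) u w"
  have nn: "2*k+1 \<noteq> 1" using k by simp
  have mle: "m \<le> 2*k+1" using m by auto
  have mfacts: "m < 2*k+1" using m unfolding atLeastAtMost_iff by presburger+
  have hex: "properE f (ex (2*k+1) s)" if "s \<in> {1..6}" "s \<notin> {}" for s
  proof -
    have "s = 1 \<or> s = 2 \<or> s = 3 \<or> s = 4 \<or> s = 5 \<or> s = 6" using that by auto
    then show ?thesis using that m mle mfacts
      by (elim disjE) (simp_all only: proper_ex[OF nn] f_def colf.simps,
          simp_all add: Lt_def A1_def A0_def M_def B1_def B0_def u_def w_def good3_def)
  qed
  have "\<forall>e\<in>snd (G k). properE f e \<or> (False \<and> e = tri m) \<or> (True \<and> e = lnk m (fst (1::nat,1::nat)) (snd (1::nat,1::nat)))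
           \<or> (\<exists>s\<in>{}. e = ex (2*k+1) s)"
    unfolding f_def
    by (rule assemble[OF k]) (use m hex[unfolded f_def] in
        \<open>simp_all add: A1_def A0_def M_def B1_def B0_def u_def w_def allk_def lkok_def lk_def jj_def triok_def good3_def\<close>)
  then show ?thesis by (intro exI[of _ f]) auto
qed

lemma inst_L120:
  fixes k m :: nat
  assumes k: "k \<ge> 1" and m: "m \<in> {1..2*k}" "even m"
  shows "\<exists>f. \<forall>e\<in>snd (G k). e \<noteq> lnk m 1 2 \<longrightarrow> properE f e"
proof -
  define A1 :: tr where "A1 = (0,0,1)"
  define A0 :: tr where "A0 = (1,1,0)"
  define M :: tr where "M = (1,1,0)"
  define B1 :: tr where "B1 = (2,0,0)"
  define B0 :: tr where "B0 = (0,2,2)"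
  define u :: nat where "u = 2"
  define w :: nat where "w = 1"
  define f where "f = colf (Lt A1 A0 M B1 B0 m) u w"
  have nn: "2*k+1 \<noteq> 1" using k by simp
  have mle: "m \<le> 2*k+1" using m by auto
  have mfacts: "1 < m" "m < 2*k+1" using m unfolding atLeastAtMost_iff by presburger+
  have hex: "properE f (ex (2*k+1) s)" if "s \<in> {1..6}" "s \<notin> {}" for s
  proof -
    have "s = 1 \<or> s = 2 \<or> s = 3 \<or> s = 4 \<or> s = 5 \<or> s = 6" using that by auto
    then show ?thesis using that m mle mfacts
      by (elim disjE) (simp_all only: proper_ex[OF nn] f_def colf.simps,
          simp_all add: Lt_def A1_def A0_def M_def B1_def B0_def u_def w_def good3_def)
  qed
  have "\<forall>e\<in>snd (G k). properE f e \<or> (False \<and> e = tri m) \<or> (True \<and> e = lnk m (fst (1::nat,2::nat)) (snd (1::nat,2::nat)))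
           \<or> (\<exists>s\<in>{}. e = ex (2*k+1) s)"
    unfolding f_def
    by (rule assemble[OF k]) (use m hex[unfolded f_def] in
        \<open>simp_all add: A1_def A0_def M_def B1_def B0_def u_def w_def allk_def lkok_def lk_def jj_def triok_def good3_def\<close>)
  then show ?thesis by (intro exI[of _ f]) auto
qed

lemma inst_L121:
  fixes k m :: nat
  assumes k: "k \<ge> 1" and m: "m \<in> {1..2*k}" "odd m"
  shows "\<exists>f. \<forall>e\<in>snd (G k). e \<noteq> lnk m 1 2 \<longrightarrow> properE f e"
proof -
  define A1 :: tr where "A1 = (0,1,0)"
  define A0 :: tr where "A0 = (1,0,1)"
  define M :: tr where "M = (0,1,0)"
  define B1 :: tr where "B1 = (1,0,0)"
  define B0 :: tr where "B0 = (0,1,1)"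
  define u :: nat where "u = 0"
  define w :: nat where "w = 1"
  define f where "f = colf (Lt A1 A0 M B1 B0 m) u w"
  have nn: "2*k+1 \<noteq> 1" using k by simp
  have mle: "m \<le> 2*k+1" using m by auto
  have mfacts: "m < 2*k+1" using m unfolding atLeastAtMost_iff by presburger+
  have hex: "properE f (ex (2*k+1) s)" if "s \<in> {1..6}" "s \<notin> {}" for s
  proof -
    have "s = 1 \<or> s = 2 \<or> s = 3 \<or> s = 4 \<or> s = 5 \<or> s = 6" using that by auto
    then show ?thesis using that m mle mfacts
      by (elim disjE) (simp_all only: proper_ex[OF nn] f_def colf.simps,
          simp_all add: Lt_def A1_def A0_def M_def B1_def B0_def u_def w_def good3_def)
  qed
  have "\<forall>e\<in>snd (G k). properE f e \<or> (False \<and> e = tri m) \<or> (True \<and> e = lnk m (fst (1::nat,2::nat)) (snd (1::nat,2::nat)))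
           \<or> (\<exists>s\<in>{}. e = ex (2*k+1) s)"
    unfolding f_def
    by (rule assemble[OF k]) (use m hex[unfolded f_def] in
        \<open>simp_all add: A1_def A0_def M_def B1_def B0_def u_def w_def allk_def lkok_def lk_def jj_def triok_def good3_def\<close>)
  then show ?thesis by (intro exI[of _ f]) auto
qed

lemma inst_L210:
  fixes k m :: nat
  assumes k: "k \<ge> 1" and m: "m \<in> {1..2*k}" "even m"
  shows "\<exists>f. \<forall>e\<in>snd (G k). e \<noteq> lnk m 2 1 \<longrightarrow> properE f e"
proof -
  define A1 :: tr where "A1 = (0,0,1)"
  define A0 :: tr where "A0 = (1,1,0)"
  define M :: tr where "M = (1,1,0)"
  define B1 :: tr where "B1 = (0,2,0)"
  define B0 :: tr where "B0 = (2,0,2)"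
  define u :: nat where "u = 2"
  define w :: nat where "w = 0"
  define f where "f = colf (Lt A1 A0 M B1 B0 m) u w"
  have nn: "2*k+1 \<noteq> 1" using k by simp
  have mle: "m \<le> 2*k+1" using m by auto
  have mfacts: "1 < m" "m < 2*k+1" using m unfolding atLeastAtMost_iff by presburger+
  have hex: "properE f (ex (2*k+1) s)" if "s \<in> {1..6}" "s \<notin> {}" for s
  proof -
    have "s = 1 \<or> s = 2 \<or> s = 3 \<or> s = 4 \<or> s = 5 \<or> s = 6" using that by auto
    then show ?thesis using that m mle mfacts
      by (elim disjE) (simp_all only: proper_ex[OF nn] f_def colf.simps,
          simp_all add: Lt_def A1_def A0_def M_def B1_def B0_def u_def w_def good3_def)
  qed
  have "\<forall>e\<in>snd (G k). properE f e \<or> (False \<and> e = tri m) \<or> (True \<and> e = lnk m (fst (2::nat,1::nat)) (snd (2::nat,1::nat)))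
           \<or> (\<exists>s\<in>{}. e = ex (2*k+1) s)"
    unfolding f_def
    by (rule assemble[OF k]) (use m hex[unfolded f_def] in
        \<open>simp_all add: A1_def A0_def M_def B1_def B0_def u_def w_def allk_def lkok_def lk_def jj_def triok_def good3_def\<close>)
  then show ?thesis by (intro exI[of _ f]) auto
qed

lemma inst_L211:
  fixes k m :: nat
  assumes k: "k \<ge> 1" and m: "m \<in> {1..2*k}" "odd m"
  shows "\<exists>f. \<forall>e\<in>snd (G k). e \<noteq> lnk m 2 1 \<longrightarrow> properE f e"
proof -
  define A1 :: tr where "A1 = (0,1,1)"
  define A0 :: tr where "A0 = (1,0,0)"
  define M :: tr where "M = (0,1,1)"
  define B1 :: tr where "B1 = (0,0,1)"
  define B0 :: tr where "B0 = (1,1,0)"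
  define u :: nat where "u = 1"
  define w :: nat where "w = 0"
  define f where "f = colf (Lt A1 A0 M B1 B0 m) u w"
  have nn: "2*k+1 \<noteq> 1" using k by simp
  have mle: "m \<le> 2*k+1" using m by auto
  have mfacts: "m < 2*k+1" using m unfolding atLeastAtMost_iff by presburger+
  have hex: "properE f (ex (2*k+1) s)" if "s \<in> {1..6}" "s \<notin> {}" for s
  proof -
    have "s = 1 \<or> s = 2 \<or> s = 3 \<or> s = 4 \<or> s = 5 \<or> s = 6" using that by auto
    then show ?thesis using that m mle mfacts
      by (elim disjE) (simp_all only: proper_ex[OF nn] f_def colf.simps,
          simp_all add: Lt_def A1_def A0_def M_def B1_def B0_def u_def w_def good3_def)
  qed
  have "\<forall>e\<in>snd (G k). properE f e \<or> (False \<and> e = tri m) \<or> (True \<and> e = lnk m (fst (2::nat,1::nat)) (snd (2::nat,1::nat)))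
           \<or> (\<exists>s\<in>{}. e = ex (2*k+1) s)"
    unfolding f_def
    by (rule assemble[OF k]) (use m hex[unfolded f_def] in
        \<open>simp_all add: A1_def A0_def M_def B1_def B0_def u_def w_def allk_def lkok_def lk_def jj_def triok_def good3_def\<close>)
  then show ?thesis by (intro exI[of _ f]) auto
qed

lemma inst_L220:
  fixes k m :: nat
  assumes k: "k \<ge> 1" and m: "m \<in> {1..2*k}" "even m"
  shows "\<exists>f. \<forall>e\<in>snd (G k). e \<noteq> lnk m 2 2 \<longrightarrow> properE f e"
proof -
  define A1 :: tr where "A1 = (0,0,1)"
  define A0 :: tr where "A0 = (1,1,0)"
  define M :: tr where "M = (1,1,0)"
  define B1 :: tr where "B1 = (0,1,0)"
  define B0 :: tr where "B0 = (1,0,1)"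
  define u :: nat where "u = 1"
  define w :: nat where "w = 0"
  define f where "f = colf (Lt A1 A0 M B1 B0 m) u w"
  have nn: "2*k+1 \<noteq> 1" using k by simp
  have mle: "m \<le> 2*k+1" using m by auto
  have mfacts: "1 < m" "m < 2*k+1" using m unfolding atLeastAtMost_iff by presburger+
  have hex: "properE f (ex (2*k+1) s)" if "s \<in> {1..6}" "s \<notin> {}" for s
  proof -
    have "s = 1 \<or> s = 2 \<or> s = 3 \<or> s = 4 \<or> s = 5 \<or> s = 6" using that by auto
    then show ?thesis using that m mle mfacts
      by (elim disjE) (simp_all only: proper_ex[OF nn] f_def colf.simps,
          simp_all add: Lt_def A1_def A0_def M_def B1_def B0_def u_def w_def good3_def)
  qed
  have "\<forall>e\<in>snd (G k). properE f e \<or> (False \<and> e = tri m) \<or> (True \<and> e = lnk m (fst (2::nat,2::nat)) (snd (2::nat,2::nat)))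
           \<or> (\<exists>s\<in>{}. e = ex (2*k+1) s)"
    unfolding f_def
    by (rule assemble[OF k]) (use m hex[unfolded f_def] in
        \<open>simp_all add: A1_def A0_def M_def B1_def B0_def u_def w_def allk_def lkok_def lk_def jj_def triok_def good3_def\<close>)
  then show ?thesis by (intro exI[of _ f]) auto
qed

lemma inst_L221:
  fixes k m :: nat
  assumes k: "k \<ge> 1" and m: "m \<in> {1..2*k}" "odd m"
  shows "\<exists>f. \<forall>e\<in>snd (G k). e \<noteq> lnk m 2 2 \<longrightarrow> properE f e"
proof -
  define A1 :: tr where "A1 = (0,0,1)"
  define A0 :: tr where "A0 = (1,1,0)"
  define M :: tr where "M = (0,0,1)"
  define B1 :: tr where "B1 = (0,1,0)"
  define B0 :: tr where "B0 = (1,0,1)"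
  define u :: nat where "u = 1"
  define w :: nat where "w = 0"
  define f where "f = colf (Lt A1 A0 M B1 B0 m) u w"
  have nn: "2*k+1 \<noteq> 1" using k by simp
  have mle: "m \<le> 2*k+1" using m by auto
  have mfacts: "m < 2*k+1" using m unfolding atLeastAtMost_iff by presburger+
  have hex: "properE f (ex (2*k+1) s)" if "s \<in> {1..6}" "s \<notin> {}" for s
  proof -
    have "s = 1 \<or> s = 2 \<or> s = 3 \<or> s = 4 \<or> s = 5 \<or> s = 6" using that by auto
    then show ?thesis using that m mle mfacts
      by (elim disjE) (simp_all only: proper_ex[OF nn] f_def colf.simps,
          simp_all add: Lt_def A1_def A0_def M_def B1_def B0_def u_def w_def good3_def)
  qed
  have "\<forall>e\<in>snd (G k). properE f e \<or> (False \<and> e = tri m) \<or> (True \<and> e = lnk m (fst (2::nat,2::nat)) (snd (2::nat,2::nat)))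
           \<or> (\<exists>s\<in>{}. e = ex (2*k+1) s)"
    unfolding f_def
    by (rule assemble[OF k]) (use m hex[unfolded f_def] in
        \<open>simp_all add: A1_def A0_def M_def B1_def B0_def u_def w_def allk_def lkok_def lk_def jj_def triok_def good3_def\<close>)
  then show ?thesis by (intro exI[of _ f]) auto
qed

lemma inst_L310:
  fixes k m :: nat
  assumes k: "k \<ge> 1" and m: "m \<in> {1..2*k}" "even m"
  shows "\<exists>f. \<forall>e\<in>snd (G k). e \<noteq> lnk m 3 1 \<longrightarrow> properE f e"
proof -
  define A1 :: tr where "A1 = (0,1,0)"
  define A0 :: tr where "A0 = (1,0,1)"
  define M :: tr where "M = (1,0,1)"
  define B1 :: tr where "B1 = (0,0,1)"
  define B0 :: tr where "B0 = (1,1,0)"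
  define u :: nat where "u = 1"
  define w :: nat where "w = 0"
  define f where "f = colf (Lt A1 A0 M B1 B0 m) u w"
  have nn: "2*k+1 \<noteq> 1" using k by simp
  have mle: "m \<le> 2*k+1" using m by auto
  have mfacts: "1 < m" "m < 2*k+1" using m unfolding atLeastAtMost_iff by presburger+
  have hex: "properE f (ex (2*k+1) s)" if "s \<in> {1..6}" "s \<notin> {}" for s
  proof -
    have "s = 1 \<or> s = 2 \<or> s = 3 \<or> s = 4 \<or> s = 5 \<or> s = 6" using that by auto
    then show ?thesis using that m mle mfacts
      by (elim disjE) (simp_all only: proper_ex[OF nn] f_def colf.simps,
          simp_all add: Lt_def A1_def A0_def M_def B1_def B0_def u_def w_def good3_def)
  qed
  have "\<forall>e\<in>snd (G k). properE f e \<or> (False \<and> e = tri m) \<or> (True \<and> e = lnk m (fst (3::nat,1::nat)) (snd (3::nat,1::nat)))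
           \<or> (\<exists>s\<in>{}. e = ex (2*k+1) s)"
    unfolding f_def
    by (rule assemble[OF k]) (use m hex[unfolded f_def] in
        \<open>simp_all add: A1_def A0_def M_def B1_def B0_def u_def w_def allk_def lkok_def lk_def jj_def triok_def good3_def\<close>)
  then show ?thesis by (intro exI[of _ f]) auto
qed

lemma inst_L311:
  fixes k m :: nat
  assumes k: "k \<ge> 1" and m: "m \<in> {1..2*k}" "odd m"
  shows "\<exists>f. \<forall>e\<in>snd (G k). e \<noteq> lnk m 3 1 \<longrightarrow> properE f e"
proof -
  define A1 :: tr where "A1 = (0,1,0)"
  define A0 :: tr where "A0 = (1,0,1)"
  define M :: tr where "M = (0,1,0)"
  define B1 :: tr where "B1 = (0,0,1)"
  define B0 :: tr where "B0 = (1,1,0)"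
  define u :: nat where "u = 1"
  define w :: nat where "w = 0"
  define f where "f = colf (Lt A1 A0 M B1 B0 m) u w"
  have nn: "2*k+1 \<noteq> 1" using k by simp
  have mle: "m \<le> 2*k+1" using m by auto
  have mfacts: "m < 2*k+1" using m unfolding atLeastAtMost_iff by presburger+
  have hex: "properE f (ex (2*k+1) s)" if "s \<in> {1..6}" "s \<notin> {}" for s
  proof -
    have "s = 1 \<or> s = 2 \<or> s = 3 \<or> s = 4 \<or> s = 5 \<or> s = 6" using that by auto
    then show ?thesis using that m mle mfacts
      by (elim disjE) (simp_all only: proper_ex[OF nn] f_def colf.simps,
          simp_all add: Lt_def A1_def A0_def M_def B1_def B0_def u_def w_def good3_def)
  qed
  have "\<forall>e\<in>snd (G k). properE f e \<or> (False \<and> e = tri m) \<or> (True \<and> e = lnk m (fst (3::nat,1::nat)) (snd (3::nat,1::nat)))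
           \<or> (\<exists>s\<in>{}. e = ex (2*k+1) s)"
    unfolding f_def
    by (rule assemble[OF k]) (use m hex[unfolded f_def] in
        \<open>simp_all add: A1_def A0_def M_def B1_def B0_def u_def w_def allk_def lkok_def lk_def jj_def triok_def good3_def\<close>)
  then show ?thesis by (intro exI[of _ f]) auto
qed

lemma inst_L320:
  fixes k m :: nat
  assumes k: "k \<ge> 1" and m: "m \<in> {1..2*k}" "even m"
  shows "\<exists>f. \<forall>e\<in>snd (G k). e \<noteq> lnk m 3 2 \<longrightarrow> properE f e"
proof -
  define A1 :: tr where "A1 = (0,1,0)"
  define A0 :: tr where "A0 = (1,0,1)"
  define M :: tr where "M = (1,0,1)"
  define B1 :: tr where "B1 = (0,0,2)"
  define B0 :: tr where "B0 = (2,2,0)"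
  define u :: nat where "u = 1"
  define w :: nat where "w = 0"
  define f where "f = colf (Lt A1 A0 M B1 B0 m) u w"
  have nn: "2*k+1 \<noteq> 1" using k by simp
  have mle: "m \<le> 2*k+1" using m by auto
  have mfacts: "1 < m" "m < 2*k+1" using m unfolding atLeastAtMost_iff by presburger+
  have hex: "properE f (ex (2*k+1) s)" if "s \<in> {1..6}" "s \<notin> {}" for s
  proof -
    have "s = 1 \<or> s = 2 \<or> s = 3 \<or> s = 4 \<or> s = 5 \<or> s = 6" using that by auto
    then show ?thesis using that m mle mfacts
      by (elim disjE) (simp_all only: proper_ex[OF nn] f_def colf.simps,
          simp_all add: Lt_def A1_def A0_def M_def B1_def B0_def u_def w_def good3_def)
  qed
  have "\<forall>e\<in>snd (G k). properE f e \<or> (False \<and> e = tri m) \<or> (True \<and> e = lnk m (fst (3::nat,2::nat)) (snd (3::nat,2::nat)))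
           \<or> (\<exists>s\<in>{}. e = ex (2*k+1) s)"
    unfolding f_def
    by (rule assemble[OF k]) (use m hex[unfolded f_def] in
        \<open>simp_all add: A1_def A0_def M_def B1_def B0_def u_def w_def allk_def lkok_def lk_def jj_def triok_def good3_def\<close>)
  then show ?thesis by (intro exI[of _ f]) auto
qed

lemma inst_L321:
  fixes k m :: nat
  assumes k: "k \<ge> 1" and m: "m \<in> {1..2*k}" "odd m"
  shows "\<exists>f. \<forall>e\<in>snd (G k). e \<noteq> lnk m 3 2 \<longrightarrow> properE f e"
proof -
  define A1 :: tr where "A1 = (0,1,1)"
  define A0 :: tr where "A0 = (1,0,0)"
  define M :: tr where "M = (0,1,1)"
  define B1 :: tr where "B1 = (1,1,0)"
  define B0 :: tr where "B0 = (0,0,1)"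
  define u :: nat where "u = 0"
  define w :: nat where "w = 0"
  define f where "f = colf (Lt A1 A0 M B1 B0 m) u w"
  have nn: "2*k+1 \<noteq> 1" using k by simp
  have mle: "m \<le> 2*k+1" using m by auto
  have mfacts: "m < 2*k+1" using m unfolding atLeastAtMost_iff by presburger+
  have hex: "properE f (ex (2*k+1) s)" if "s \<in> {1..6}" "s \<notin> {}" for s
  proof -
    have "s = 1 \<or> s = 2 \<or> s = 3 \<or> s = 4 \<or> s = 5 \<or> s = 6" using that by auto
    then show ?thesis using that m mle mfacts
      by (elim disjE) (simp_all only: proper_ex[OF nn] f_def colf.simps,
          simp_all add: Lt_def A1_def A0_def M_def B1_def B0_def u_def w_def good3_def)
  qed
  have "\<forall>e\<in>snd (G k). properE f e \<or> (False \<and> e = tri m) \<or> (True \<and> e = lnk m (fst (3::nat,2::nat)) (snd (3::nat,2::nat)))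
           \<or> (\<exists>s\<in>{}. e = ex (2*k+1) s)"
    unfolding f_def
    by (rule assemble[OF k]) (use m hex[unfolded f_def] in
        \<open>simp_all add: A1_def A0_def M_def B1_def B0_def u_def w_def allk_def lkok_def lk_def jj_def triok_def good3_def\<close>)
  then show ?thesis by (intro exI[of _ f]) auto
qed

lemma inst_E1:
  fixes k m :: nat
  assumes k: "k \<ge> 1" and m: "m = 0"
  shows "\<exists>f. \<forall>e\<in>snd (G k). e \<noteq> ex (2*k+1) 1 \<longrightarrow> properE f e"
proof -
  define A1 :: tr where "A1 = (0,1,1)"
  define A0 :: tr where "A0 = (1,0,0)"
  define M :: tr where "M = (1,0,0)"
  define B1 :: tr where "B1 = (0,1,1)"
  define B0 :: tr where "B0 = (1,0,0)"
  define u :: nat where "u = 2"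
  define w :: nat where "w = 0"
  define f where "f = colf (Lt A1 A0 M B1 B0 m) u w"
  have nn: "2*k+1 \<noteq> 1" using k by simp
  have mle: "m \<le> 2*k+1" using m by auto
  have mfacts: "m = 0" using m unfolding atLeastAtMost_iff by presburger+
  have hex: "properE f (ex (2*k+1) s)" if "s \<in> {1..6}" "s \<notin> {1}" for s
  proof -
    have "s = 1 \<or> s = 2 \<or> s = 3 \<or> s = 4 \<or> s = 5 \<or> s = 6" using that by auto
    then show ?thesis using that m mle mfacts
      by (elim disjE) (simp_all only: proper_ex[OF nn] f_def colf.simps,
          simp_all add: Lt_def A1_def A0_def M_def B1_def B0_def u_def w_def good3_def)
  qed
  have "\<forall>e\<in>snd (G k). properE f e \<or> (False \<and> e = tri m) \<or> (False \<and> e = lnk m (fst (0::nat,0::nat)) (snd (0::nat,0::nat)))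
           \<or> (\<exists>s\<in>{1}. e = ex (2*k+1) s)"
    unfolding f_def
    by (rule assemble[OF k]) (use m hex[unfolded f_def] in
        \<open>simp_all add: A1_def A0_def M_def B1_def B0_def u_def w_def allk_def lkok_def lk_def jj_def triok_def good3_def\<close>)
  then show ?thesis by (intro exI[of _ f]) auto
qed

lemma inst_E2:
  fixes k m :: nat
  assumes k: "k \<ge> 1" and m: "m = 0"
  shows "\<exists>f. \<forall>e\<in>snd (G k). e \<noteq> ex (2*k+1) 2 \<longrightarrow> properE f e"
proof -
  define A1 :: tr where "A1 = (0,0,1)"
  define A0 :: tr where "A0 = (1,1,0)"
  define M :: tr where "M = (1,1,0)"
  define B1 :: tr where "B1 = (0,0,1)"
  define B0 :: tr where "B0 = (1,1,0)"
  define u :: nat where "u = 1"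
  define w :: nat where "w = 2"
  define f where "f = colf (Lt A1 A0 M B1 B0 m) u w"
  have nn: "2*k+1 \<noteq> 1" using k by simp
  have mle: "m \<le> 2*k+1" using m by auto
  have mfacts: "m = 0" using m unfolding atLeastAtMost_iff by presburger+
  have hex: "properE f (ex (2*k+1) s)" if "s \<in> {1..6}" "s \<notin> {2}" for s
  proof -
    have "s = 1 \<or> s = 2 \<or> s = 3 \<or> s = 4 \<or> s = 5 \<or> s = 6" using that by auto
    then show ?thesis using that m mle mfacts
      by (elim disjE) (simp_all only: proper_ex[OF nn] f_def colf.simps,
          simp_all add: Lt_def A1_def A0_def M_def B1_def B0_def u_def w_def good3_def)
  qed
  have "\<forall>e\<in>snd (G k). properE f e \<or> (False \<and> e = tri m) \<or> (False \<and> e = lnk m (fst (0::nat,0::nat)) (snd (0::nat,0::nat)))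
           \<or> (\<exists>s\<in>{2}. e = ex (2*k+1) s)"
    unfolding f_def
    by (rule assemble[OF k]) (use m hex[unfolded f_def] in
        \<open>simp_all add: A1_def A0_def M_def B1_def B0_def u_def w_def allk_def lkok_def lk_def jj_def triok_def good3_def\<close>)
  then show ?thesis by (intro exI[of _ f]) auto
qed

lemma inst_E3:
  fixes k m :: nat
  assumes k: "k \<ge> 1" and m: "m = 0"
  shows "\<exists>f. \<forall>e\<in>snd (G k). e \<noteq> ex (2*k+1) 3 \<longrightarrow> properE f e"
proof -
  define A1 :: tr where "A1 = (0,1,1)"
  define A0 :: tr where "A0 = (1,0,0)"
  define M :: tr where "M = (1,0,0)"
  define B1 :: tr where "B1 = (0,1,1)"
  define B0 :: tr where "B0 = (1,0,0)"
  define u :: nat where "u = 0"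
  define w :: nat where "w = 0"
  define f where "f = colf (Lt A1 A0 M B1 B0 m) u w"
  have nn: "2*k+1 \<noteq> 1" using k by simp
  have mle: "m \<le> 2*k+1" using m by auto
  have mfacts: "m = 0" using m unfolding atLeastAtMost_iff by presburger+
  have hex: "properE f (ex (2*k+1) s)" if "s \<in> {1..6}" "s \<notin> {3}" for s
  proof -
    have "s = 1 \<or> s = 2 \<or> s = 3 \<or> s = 4 \<or> s = 5 \<or> s = 6" using that by auto
    then show ?thesis using that m mle mfacts
      by (elim disjE) (simp_all only: proper_ex[OF nn] f_def colf.simps,
          simp_all add: Lt_def A1_def A0_def M_def B1_def B0_def u_def w_def good3_def)
  qed
  have "\<forall>e\<in>snd (G k). properE f e \<or> (False \<and> e = tri m) \<or> (False \<and> e = lnk m (fst (0::nat,0::nat)) (snd (0::nat,0::nat)))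
           \<or> (\<exists>s\<in>{3}. e = ex (2*k+1) s)"
    unfolding f_def
    by (rule assemble[OF k]) (use m hex[unfolded f_def] in
        \<open>simp_all add: A1_def A0_def M_def B1_def B0_def u_def w_def allk_def lkok_def lk_def jj_def triok_def good3_def\<close>)
  then show ?thesis by (intro exI[of _ f]) auto
qed

lemma inst_E4:
  fixes k m :: nat
  assumes k: "k \<ge> 1" and m: "m = 0"
  shows "\<exists>f. \<forall>e\<in>snd (G k). e \<noteq> ex (2*k+1) 4 \<longrightarrow> properE f e"
proof -
  define A1 :: tr where "A1 = (0,1,1)"
  define A0 :: tr where "A0 = (1,0,0)"
  define M :: tr where "M = (1,0,0)"
  define B1 :: tr where "B1 = (0,1,1)"
  define B0 :: tr where "B0 = (1,0,0)"
  define u :: nat where "u = 1"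
  define w :: nat where "w = 0"
  define f where "f = colf (Lt A1 A0 M B1 B0 m) u w"
  have nn: "2*k+1 \<noteq> 1" using k by simp
  have mle: "m \<le> 2*k+1" using m by auto
  have mfacts: "m = 0" using m unfolding atLeastAtMost_iff by presburger+
  have hex: "properE f (ex (2*k+1) s)" if "s \<in> {1..6}" "s \<notin> {4}" for s
  proof -
    have "s = 1 \<or> s = 2 \<or> s = 3 \<or> s = 4 \<or> s = 5 \<or> s = 6" using that by auto
    then show ?thesis using that m mle mfacts
      by (elim disjE) (simp_all only: proper_ex[OF nn] f_def colf.simps,
          simp_all add: Lt_def A1_def A0_def M_def B1_def B0_def u_def w_def good3_def)
  qed
  have "\<forall>e\<in>snd (G k). properE f e \<or> (False \<and> e = tri m) \<or> (False \<and> e = lnk m (fst (0::nat,0::nat)) (snd (0::nat,0::nat)))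
           \<or> (\<exists>s\<in>{4}. e = ex (2*k+1) s)"
    unfolding f_def
    by (rule assemble[OF k]) (use m hex[unfolded f_def] in
        \<open>simp_all add: A1_def A0_def M_def B1_def B0_def u_def w_def allk_def lkok_def lk_def jj_def triok_def good3_def\<close>)
  then show ?thesis by (intro exI[of _ f]) auto
qed

lemma inst_E5:
  fixes k m :: nat
  assumes k: "k \<ge> 1" and m: "m = 0"
  shows "\<exists>f. \<forall>e\<in>snd (G k). e \<noteq> ex (2*k+1) 5 \<longrightarrow> properE f e"
proof -
  define A1 :: tr where "A1 = (0,0,1)"
  define A0 :: tr where "A0 = (1,1,0)"
  define M :: tr where "M = (1,1,0)"
  define B1 :: tr where "B1 = (0,0,1)"
  define B0 :: tr where "B0 = (1,1,0)"
  define u :: nat where "u = 1"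
  define w :: nat where "w = 0"
  define f where "f = colf (Lt A1 A0 M B1 B0 m) u w"
  have nn: "2*k+1 \<noteq> 1" using k by simp
  have mle: "m \<le> 2*k+1" using m by auto
  have mfacts: "m = 0" using m unfolding atLeastAtMost_iff by presburger+
  have hex: "properE f (ex (2*k+1) s)" if "s \<in> {1..6}" "s \<notin> {5}" for s
  proof -
    have "s = 1 \<or> s = 2 \<or> s = 3 \<or> s = 4 \<or> s = 5 \<or> s = 6" using that by auto
    then show ?thesis using that m mle mfacts
      by (elim disjE) (simp_all only: proper_ex[OF nn] f_def colf.simps,
          simp_all add: Lt_def A1_def A0_def M_def B1_def B0_def u_def w_def good3_def)
  qed
  have "\<forall>e\<in>snd (G k). properE f e \<or> (False \<and> e = tri m) \<or> (False \<and> e = lnk m (fst (0::nat,0::nat)) (snd (0::nat,0::nat)))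
           \<or> (\<exists>s\<in>{5}. e = ex (2*k+1) s)"
    unfolding f_def
    by (rule assemble[OF k]) (use m hex[unfolded f_def] in
        \<open>simp_all add: A1_def A0_def M_def B1_def B0_def u_def w_def allk_def lkok_def lk_def jj_def triok_def good3_def\<close>)
  then show ?thesis by (intro exI[of _ f]) auto
qed

lemma inst_E6:
  fixes k m :: nat
  assumes k: "k \<ge> 1" and m: "m = 0"
  shows "\<exists>f. \<forall>e\<in>snd (G k). e \<noteq> ex (2*k+1) 6 \<longrightarrow> properE f e"
proof -
  define A1 :: tr where "A1 = (0,0,1)"
  define A0 :: tr where "A0 = (1,1,0)"
  define M :: tr where "M = (1,1,0)"
  define B1 :: tr where "B1 = (0,0,1)"
  define B0 :: tr where "B0 = (1,1,0)"
  define u :: nat where "u = 1"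
  define w :: nat where "w = 1"
  define f where "f = colf (Lt A1 A0 M B1 B0 m) u w"
  have nn: "2*k+1 \<noteq> 1" using k by simp
  have mle: "m \<le> 2*k+1" using m by auto
  have mfacts: "m = 0" using m unfolding atLeastAtMost_iff by presburger+
  have hex: "properE f (ex (2*k+1) s)" if "s \<in> {1..6}" "s \<notin> {6}" for s
  proof -
    have "s = 1 \<or> s = 2 \<or> s = 3 \<or> s = 4 \<or> s = 5 \<or> s = 6" using that by auto
    then show ?thesis using that m mle mfacts
      by (elim disjE) (simp_all only: proper_ex[OF nn] f_def colf.simps,
          simp_all add: Lt_def A1_def A0_def M_def B1_def B0_def u_def w_def good3_def)
  qed
  have "\<forall>e\<in>snd (G k). properE f e \<or> (False \<and> e = tri m) \<or> (False \<and> e = lnk m (fst (0::nat,0::nat)) (snd (0::nat,0::nat)))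
           \<or> (\<exists>s\<in>{6}. e = ex (2*k+1) s)"
    unfolding f_def
    by (rule assemble[OF k]) (use m hex[unfolded f_def] in
        \<open>simp_all add: A1_def A0_def M_def B1_def B0_def u_def w_def allk_def lkok_def lk_def jj_def triok_def good3_def\<close>)
  then show ?thesis by (intro exI[of _ f]) auto
qed



lemma avoid:
  assumes k: "k \<ge> 1" and e: "e \<in> snd (G k)"
  shows "\<exists>f. \<forall>e'\<in>snd (G k). e' \<noteq> e \<longrightarrow> properE f e'"
proof -
  from edges_cases[OF e] consider
      (T) i where "i \<in> {2..2*k+1}" "e = tri i"
    | (L) q j t where "q \<in> {1..2*k}" "j \<in> {1..3}" "t \<in> {1,2}" "e = lnk q j t"
    | (E) s where "s \<in> {1..6}" "e = ex (2*k+1) s"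
    by blast
  then show ?thesis
  proof cases
    case T
    then show ?thesis using inst_Teven[OF k T(1)] inst_Todd[OF k T(1)] by (cases "even i") auto
  next
    case L
    have "j = 1 \<or> j = 2 \<or> j = 3" "t = 1 \<or> t = 2" using L by auto
    then show ?thesis using L(1,4)
      inst_L110[OF k L(1)] inst_L111[OF k L(1)] inst_L120[OF k L(1)] inst_L121[OF k L(1)]
      inst_L210[OF k L(1)] inst_L211[OF k L(1)] inst_L220[OF k L(1)] inst_L221[OF k L(1)]
      inst_L310[OF k L(1)] inst_L311[OF k L(1)] inst_L320[OF k L(1)] inst_L321[OF k L(1)]
      by (cases "even q") auto
  next
    case E
    have "s = 1 \<or> s = 2 \<or> s = 3 \<or> s = 4 \<or> s = 5 \<or> s = 6" using E by auto
    then show ?thesis using E(2)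
      inst_E1[OF k refl] inst_E2[OF k refl] inst_E3[OF k refl]
      inst_E4[OF k refl] inst_E5[OF k refl] inst_E6[OF k refl]
      by (elim disjE) simp_all
  qed
qed

lemma Gfst: "fst (G k) = {Vx i j | i j. i \<in> {1..2*k+1} \<and> j \<in> {1..3}} \<union> {U, W}"
  unfolding G_def H_def Let_def by simp

lemma Vin: "i \<in> {1..2*k+1} \<Longrightarrow> j \<in> {1..3} \<Longrightarrow> Vx i j \<in> fst (G k)"
  unfolding Gfst by blast

lemma UWin: "U \<in> fst (G k)" "W \<in> fst (G k)" unfolding Gfst by blast+

lemma jj_range: "jj j t \<in> {1..3}" by (simp add: jj_def)

lemma card3: "x \<noteq> y \<Longrightarrow> y \<noteq> z \<Longrightarrow> x \<noteq> z \<Longrightarrow> card {x,y,z} = 3"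
  by (simp add: card_insert_if)

lemma edge_props:
  assumes k: "k \<ge> 1" and e: "e \<in> snd (G k)"
  shows "e \<subseteq> fst (G k) \<and> card e = 3 \<and> finite e"
proof -
  have nn: "2*k+1 \<noteq> 1" using k by simp
  from edges_cases[OF e] consider
      (T) i where "i \<in> {2..2*k+1}" "e = tri i"
    | (L) q j t where "q \<in> {1..2*k}" "j \<in> {1..3}" "t \<in> {1,2}" "e = lnk q j t"
    | (E) s where "s \<in> {1..6}" "e = ex (2*k+1) s"
    by blast
  then show ?thesis
  proof cases
    case T
    then have "i \<in> {1..2*k+1}" by simp
    then show ?thesis unfolding T(2) tri_def
      by (auto intro!: Vin card3)
  next
    case L
    have "Suc q \<in> {1..2*k+1}" "q \<in> {1..2*k+1}" using L by auto
    moreover have "jj j t \<noteq> j" using jj_ne L by blast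
    ultimately show ?thesis unfolding L(4) lnk_def using L(2) jj_range[of j t]
      by (auto intro!: Vin card3)
  next
    case E
    have "s = 1 \<or> s = 2 \<or> s = 3 \<or> s = 4 \<or> s = 5 \<or> s = 6" using E by auto
    moreover have "1 \<in> {1..2*k+1}" "2*k+1 \<in> {1..2*k+1}" by auto
    moreover have "(1::nat) \<in> {1..3}" "(2::nat) \<in> {1..3}" "(3::nat) \<in> {1..3}" by auto
    ultimately show ?thesis unfolding E(2) ex_def using nn UWin
      by (elim disjE) (auto intro!: Vin card3)
  qed
qed

lemma bihyp: assumes k: "k \<ge> 1" shows "bihypergraph (G k)"
proof -
  have "{Vx i j | i j. i \<in> {1..2*k+1} \<and> j \<in> {1..3}} \<subseteq> (\<lambda>(i,j). Vx i j) ` ({1..2*k+1} \<times> {1..3})"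
    by auto
  then have "finite {Vx i j | i j. i \<in> {1..2*k+1} \<and> j \<in> {1..3}}"
    by (rule finite_subset) simp
  then have fin: "finite (fst (G k))" unfolding Gfst by simp
  have sub: "\<forall>e\<in>snd (G k). e \<subseteq> fst (G k)" using edge_props[OF k] by blast
  have anti: "\<forall>e\<in>snd (G k). \<forall>e'\<in>snd (G k). e \<subseteq> e' \<longrightarrow> e = e'"
  proof (intro ballI impI)
    fix e e' assume "e \<in> snd (G k)" "e' \<in> snd (G k)" "e \<subseteq> e'"
    with edge_props[OF k] show "e = e'" by (metis card_subset_eq)
  qed
  show ?thesis unfolding bihypergraph_def using fin sub anti by blast
qed

lemma cover:
  assumes k: "k \<ge> 1" and v: "v \<in> fst (G k)"
  shows "\<exists>e\<in>snd (G k). v \<in> e"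
proof -
  from v consider (V) i j where "i \<in> {1..2*k+1}" "j \<in> {1..3}" "v = Vx i j" | "v = U" | "v = W"
    unfolding Gfst by blast
  then show ?thesis
  proof cases
    case V
    show ?thesis
    proof (cases "i \<le> 2*k")
      case True
      then have "lnk i j 1 \<in> snd (G k)" using V by (intro lnk_in) auto
      moreover have "v \<in> lnk i j 1" using V by (simp add: lnk_def)
      ultimately show ?thesis by blast
    next
      case False
      then have "i = Suc (2*k)" using V by auto
      moreover have "lnk (2*k) j 1 \<in> snd (G k)" using V k by (intro lnk_in) auto
      ultimately show ?thesis using V by (auto simp: lnk_def)
    qed
  next
    case 2
    have "ex (2*k+1) 1 \<in> snd (G k)" by (rule ex_in) simp
    then show ?thesis using 2 by (auto simp: ex_def)
  next
    case 3
    have "ex (2*k+1) 2 \<in> snd (G k)" by (rule ex_in) simp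
    then show ?thesis using 3 by (auto simp: ex_def)
  qed
qed

theorem mainTheorem20:
  fixes k :: nat
  assumes "k \<ge> 1"
  shows "minimal_uncolorable (G k)"
proof -
  have "\<not> colorable (G k)" unfolding colorable_def using uncol[OF assms] by blast
  moreover have "colorable H'" if "subhypergraph H' (G k) \<and> H' \<noteq> G k" for H'
  proof -
    from that have s: "bihypergraph H'" "fst H' \<subseteq> fst (G k)" "snd H' \<subseteq> snd (G k)" "H' \<noteq> G k"
      unfolding subhypergraph_def by auto
    have "\<exists>e\<in>snd (G k). e \<notin> snd H'"
    proof (rule ccontr)
      assume "\<not> ?thesis"
      then have es: "snd H' = snd (G k)" using s by auto
      have "fst (G k) \<subseteq> fst H'"
      proof
        fix v assume "v \<in> fst (G k)"
        then obtain e where "e \<in> snd (G k)" "v \<in> e" using cover[OF assms] by blast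
        then show "v \<in> fst H'" using s(1) es unfolding bihypergraph_def by blast
      qed
      then have "fst H' = fst (G k)" using s by auto
      then have "H' = G k" using es by (simp add: prod_eq_iff)
      then show False using s by simp
    qed
    then obtain e where e: "e \<in> snd (G k)" "e \<notin> snd H'" by blast
    obtain f where f: "\<forall>e'\<in>snd (G k). e' \<noteq> e \<longrightarrow> properE f e'" using avoid[OF assms e(1)] by blast
    have "proper_coloring H' f" unfolding proper_coloring_def
    proof
      fix e' assume "e' \<in> snd H'"
      then have "e' \<in> snd (G k)" "e' \<noteq> e" using s e by auto
      then show "1 < card (f ` e') \<and> card (f ` e') < card e'" using f unfolding properE_def by blast
    qed
    then show ?thesis unfolding colorable_def by blast
  qed
  ultimately show ?thesis unfolding minimal_uncolorable_def using bihyp[OF assms] by blast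
qed


end
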